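(* For integers $j,r$ with $2\le j\le n-1$ and $0\le r\le j-2$, let $\pi_{j,r}=s_j\cdot s_{j-1}\cdots s_{j-r}$. Then $w_j\cdot\pi_{j,r}=\pi_{j,r}\cdot w_{j-r-1}$ and $\ell(w_j\cdot\pi_{j,r})=\ell(\pi_{j,r})+2(j-r-1)$.
   Context: $D_n$ ($n\ge2$) is the Coxeter group with generators $s_{1'},s_1,\dots,s_{n-1}$ and relations $s^2=1$, $(s_i s_{i+1})^3=1$, $(s_is_j)^2=1$ for $|i-j|\ge 2$, $(s_{1'}s_2)^3=1$, $(s_{1'}s_i)^2=1$ for $i\ne 2$. $w_k=s_k s_{k-1}\cdots s_2 s_1 s_{1'} s_2\cdots s_k$ for $1\le k\le n-1$; $\ell$ is Coxeter length with respect to $\{s_{1'},s_1,\dots,s_{n-1}\}$. *)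

theory Defs
  imports Main
begin

text \<open>Generators of D_n: G' is s_{1'}, G i is s_i (valid for 1 <= i <= n-1).
  Group elements are represented by words (lists of generators) modulo the
  congruence generated by the Coxeter relators (each relator equal to the empty word).
  Since every generator is an involution, this monoid presentation presents the group D_n.\<close>

datatype gen = G' | G nat

definition valid :: "nat \<Rightarrow> gen set" where
  "valid n = insert G' {G i | i. 1 \<le> i \<and> i \<le> n - 1}"

definition relators :: "nat \<Rightarrow> gen list set" where
  "relators n =
     {[s, s] | s. s \<in> valid n}
   \<union> {concat (replicate 3 [G i, G (i+1)]) | i. 1 \<le> i \<and> i + 1 \<le> n - 1}
   \<union> {concat (replicate 2 [G i, G j]) | i j. 1 \<le> i \<and> i \<le> n - 1 \<and> 1 \<le> j \<and> j \<le> n - 1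
                                           \<and> (i + 2 \<le> j \<or> j + 2 \<le> i)}
   \<union> {concat (replicate 3 [G', G 2]) | x :: unit. 2 \<le> n - 1}
   \<union> {concat (replicate 2 [G', G i]) | i. 1 \<le> i \<and> i \<le> n - 1 \<and> i \<noteq> 2}"

inductive eqv :: "nat \<Rightarrow> gen list \<Rightarrow> gen list \<Rightarrow> bool" for n where
  eqv_refl: "eqv n x x"
| eqv_sym: "eqv n x y \<Longrightarrow> eqv n y x"
| eqv_trans: "eqv n x y \<Longrightarrow> eqv n y z \<Longrightarrow> eqv n x z"
| eqv_rel: "r \<in> relators n \<Longrightarrow> eqv n (u @ r @ v) (u @ v)"

definition len :: "nat \<Rightarrow> gen list \<Rightarrow> nat" where
  "len n x = (LEAST k. \<exists>y. set y \<subseteq> valid n \<and> eqv n x y \<and> length y = k)"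

definition wD :: "nat \<Rightarrow> gen list" where
  "wD k = map G (rev [1..<k+1]) @ [G'] @ map G [2..<k+1]"

definition piD :: "nat \<Rightarrow> nat \<Rightarrow> gen list" where
  "piD j r = map G (rev [j - r..<j+1])"

end

theory Submission
  imports Defs
begin

lemma eqv_cong: "eqv n x y \<Longrightarrow> eqv n (u @ x @ v) (u @ y @ v)"
proof (induction rule: eqv.induct)
  case (eqv_refl x) then show ?case by (rule eqv.eqv_refl)
next
  case (eqv_sym x y) show ?case using eqv_sym.IH by (rule eqv.eqv_sym)
next
  case (eqv_trans x y z) then show ?case by (metis eqv.eqv_trans)
next
  case (eqv_rel r u' v')
  have "eqv n ((u @ u') @ r @ (v' @ v)) ((u @ u') @ (v' @ v))"
    by (rule eqv.eqv_rel[OF eqv_rel])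
  then show ?case by simp
qed

lemma wD_Suc: "2 \<le> k \<Longrightarrow> wD k = [G k] @ wD (k - 1) @ [G k]"
proof -
  assume "2 \<le> k"
  then obtain m where m: "k = Suc m" "1 \<le> m" by (cases k) auto
  have a: "rev [1..<k+1] = k # rev [1..<k]" using m by simp
  have b: "[2..<k+1] = [2..<k] @ [k]" using m by simp
  show ?thesis unfolding wD_def a b using m by simp
qed

lemma key_eqv:
  assumes "2 \<le> m" "m \<le> n - 1"
  shows "eqv n (wD m @ [G m]) ([G m] @ wD (m - 1))"
proof -
  have r: "[G m, G m] \<in> relators n" using assms unfolding relators_def valid_def by auto
  have "eqv n (([G m] @ wD (m - 1)) @ [G m, G m] @ []) (([G m] @ wD (m - 1)) @ [])"
    by (rule eqv.eqv_rel[OF r])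
  then show ?thesis using wD_Suc[OF assms(1)] by simp
qed

lemma piD_Suc: "r + 1 \<le> j \<Longrightarrow> piD j (Suc r) = piD j r @ [G (j - r - 1)]"
proof -
  assume "r + 1 \<le> j"
  then have "[j - Suc r..<j+1] = (j - r - 1) # [j - r..<j+1]"
    by (simp add: upt_conv_Cons Suc_diff_Suc)
  then show ?thesis unfolding piD_def by simp
qed

lemma main_eqv:
  assumes "2 \<le> j" "j \<le> n - 1"
  shows "r \<le> j - 2 \<Longrightarrow> eqv n (wD j @ piD j r) (piD j r @ wD (j - r - 1))"
proof (induction r)
  case 0
  have "piD j 0 = [G j]" unfolding piD_def by simp
  then show ?case using key_eqv[OF assms] by simp
next
  case (Suc r)
  have IH: "eqv n (wD j @ piD j r) (piD j r @ wD (j - r - 1))" using Suc by simp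
  have ps: "piD j (Suc r) = piD j r @ [G (j - r - 1)]" using Suc.prems by (intro piD_Suc) simp
  have k: "2 \<le> j - r - 1" "j - r - 1 \<le> n - 1" using Suc.prems assms by auto
  have e1: "eqv n ((wD j @ piD j r) @ [G (j - r - 1)]) ((piD j r @ wD (j - r - 1)) @ [G (j - r - 1)])"
    using eqv_cong[OF IH, of "[]" "[G (j - r - 1)]"] by simp
  have e2: "eqv n (piD j r @ (wD (j - r - 1) @ [G (j - r - 1)]) @ [])
                  (piD j r @ ([G (j - r - 1)] @ wD (j - r - 1 - 1)) @ [])"
    by (rule eqv_cong[OF key_eqv[OF k]])
  have "j - Suc r - 1 = j - r - 1 - 1" by simp
  then show ?case unfolding ps using eqv.eqv_trans[OF e1] e2 by simp
qed

definition sw :: "int \<Rightarrow> int \<Rightarrow> int" where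
 "sw a x = (if x = a then a + 1 else if x = a + 1 then a else if x = - a then - a - 1 else if x = - a - 1 then - a else x)"
definition sp :: "int \<Rightarrow> int" where
 "sp x = (if x = 1 then -2 else if x = 2 then -1 else if x = -1 then 2 else if x = -2 then 1 else x)"

lemma sw_inv: "a \<ge> 1 \<Longrightarrow> sw a (sw a x) = x"
  unfolding sw_def by auto
lemma sp_inv: "sp (sp x) = x"
  unfolding sp_def by auto
lemma sw_braid: assumes "a \<ge> 1" shows "sw a (sw (1+a) (sw a (sw (1+a) (sw a (sw (1+a) x))))) = x"
proof -
  have "x = a \<or> x = a+1 \<or> x = a+2 \<or> x = -a \<or> x = -a-1 \<or> x = -a-2 \<or>
     (x \<noteq> a \<and> x \<noteq> a+1 \<and> x \<noteq> a+2 \<and> x \<noteq> -a \<and> x \<noteq> -a-1 \<and> x \<noteq> -a-2)" by blast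
  then show ?thesis
    by (elim disjE) (use assms in \<open>simp_all add: sw_def\<close>)
qed
lemma sw_comm: assumes "a \<ge> 1" "b \<ge> 1" "a + 2 \<le> b \<or> b + 2 \<le> a" shows "sw a (sw b (sw a (sw b x))) = x"
proof -
  have "x = a \<or> x = a+1 \<or> x = b \<or> x = b+1 \<or> x = -a \<or> x = -a-1 \<or> x = -b \<or> x = -b-1 \<or>
     (x \<noteq> a \<and> x \<noteq> a+1 \<and> x \<noteq> b \<and> x \<noteq> b+1 \<and> x \<noteq> -a \<and> x \<noteq> -a-1 \<and> x \<noteq> -b \<and> x \<noteq> -b-1)" by blast
  then show ?thesis
    using assms(3) by (elim disjE) (use assms(1,2) in \<open>simp_all add: sw_def\<close>)
qed
lemma sp_braid: "sp (sw 2 (sp (sw 2 (sp (sw 2 x))))) = x"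
proof -
  have "x = 1 \<or> x = 2 \<or> x = 3 \<or> x = -1 \<or> x = -2 \<or> x = -3 \<or>
     (x \<noteq> 1 \<and> x \<noteq> 2 \<and> x \<noteq> 3 \<and> x \<noteq> -1 \<and> x \<noteq> -2 \<and> x \<noteq> -3)" by blast
  then show ?thesis
    by (elim disjE) (simp_all add: sw_def sp_def)
qed
lemma sp_comm: assumes "a \<ge> 1" "a \<noteq> 2" shows "sp (sw a (sp (sw a x))) = x"
proof -
  have "x = 1 \<or> x = 2 \<or> x = a \<or> x = a+1 \<or> x = -1 \<or> x = -2 \<or> x = -a \<or> x = -a-1 \<or>
     (x \<noteq> 1 \<and> x \<noteq> 2 \<and> x \<noteq> a \<and> x \<noteq> a+1 \<and> x \<noteq> -1 \<and> x \<noteq> -2 \<and> x \<noteq> -a \<and> x \<noteq> -a-1)" by blast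
  then show ?thesis
    by (elim disjE) (use assms in \<open>simp_all add: sw_def sp_def\<close>)
qed

fun sg :: "gen \<Rightarrow> int \<Rightarrow> int" where
  "sg G' = sp"
| "sg (G i) = sw (int i)"

primrec perm :: "gen list \<Rightarrow> int \<Rightarrow> int" where
  "perm [] = id"
| "perm (g # gs) = sg g \<circ> perm gs"

lemma perm_append: "perm (x @ y) = perm x \<circ> perm y"
  by (induction x) auto

lemma valid_cases: "g \<in> valid n \<Longrightarrow> g = G' \<or> (\<exists>i. g = G i \<and> 1 \<le> i \<and> i + 1 \<le> n)"
  unfolding valid_def by (cases g) auto

lemma sg_inv: "g \<in> valid n \<Longrightarrow> sg g (sg g x) = x"
  by (drule valid_cases) (auto simp: sw_inv sp_inv)

lemma perm_rel: "r \<in> relators n \<Longrightarrow> perm r = id"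
proof -
  assume "r \<in> relators n"
  then consider (a) s where "r = [s, s]" "s \<in> valid n"
    | (b) i where "r = concat (replicate 3 [G i, G (i+1)])" "1 \<le> i"
    | (c) i j where "r = concat (replicate 2 [G i, G j])" "1 \<le> i" "1 \<le> j" "i + 2 \<le> j \<or> j + 2 \<le> i"
    | (d) "r = concat (replicate 3 [G', G 2])"
    | (e) i where "r = concat (replicate 2 [G', G i])" "1 \<le> i" "i \<noteq> 2"
    unfolding relators_def by blast
  then show ?thesis
  proof cases
    case a then show ?thesis using sg_inv[of s n] by (auto simp: fun_eq_iff)
  next
    case b then show ?thesis using sw_braid[of "int i"] by (auto simp: fun_eq_iff numeral_eq_Suc)
  next
    case c
    have "int i + 2 \<le> int j \<or> int j + 2 \<le> int i" using c(4) by auto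
    then show ?thesis using c sw_comm[of "int i" "int j"] by (auto simp: fun_eq_iff numeral_eq_Suc)
  next
    case d then show ?thesis using sp_braid by (auto simp: fun_eq_iff numeral_eq_Suc)
  next
    case e then show ?thesis using sp_comm[of "int i"] by (auto simp: fun_eq_iff numeral_eq_Suc)
  qed
qed

lemma perm_eqv: "eqv n x y \<Longrightarrow> perm x = perm y"
  by (induction rule: eqv.induct) (auto simp: perm_append perm_rel)

definition Nset :: "nat \<Rightarrow> (int \<Rightarrow> int) \<Rightarrow> (int \<times> int) set" where
  "Nset n p = {(x,y). x \<noteq> y \<and> x \<noteq> 0 \<and> - int n \<le> x \<and> x \<le> int n \<and> y \<noteq> 0 \<and> - int n \<le> y \<and> y \<le> int n
     \<and> x + y > 0 \<and> p x + p y < 0}"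

fun alpha :: "gen \<Rightarrow> (int \<times> int) set" where
  "alpha G' = {(1,2),(2,1)}"
| "alpha (G i) = {(int i + 1, - int i), (- int i, int i + 1)}"

lemma Nset_finite: "finite (Nset n p)"
proof -
  have "Nset n p \<subseteq> {-int n..int n} \<times> {-int n..int n}" unfolding Nset_def by auto
  then show ?thesis by (rule finite_subset) simp
qed

lemma sw_range: fixes a x N :: int
  shows "1 \<le> a \<Longrightarrow> a + 1 \<le> N \<Longrightarrow> x \<noteq> 0 \<Longrightarrow> -N \<le> x \<Longrightarrow> x \<le> N \<Longrightarrow> sw a x \<noteq> 0 \<and> -N \<le> sw a x \<and> sw a x \<le> N"
  unfolding sw_def by (simp split: if_split)
lemma sp_range: fixes x N :: int
  shows "2 \<le> N \<Longrightarrow> x \<noteq> 0 \<Longrightarrow> -N \<le> x \<Longrightarrow> x \<le> N \<Longrightarrow> sp x \<noteq> 0 \<and> -N \<le> sp x \<and> sp x \<le> N"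
  unfolding sp_def by (simp split: if_split)

lemma sg_range: "g \<in> valid n \<Longrightarrow> 2 \<le> n \<Longrightarrow> x \<noteq> 0 \<Longrightarrow> - int n \<le> x \<Longrightarrow> x \<le> int n \<Longrightarrow>
   sg g x \<noteq> 0 \<and> - int n \<le> sg g x \<and> sg g x \<le> int n"
proof (drule valid_cases, elim disjE exE conjE)
  assume "g = G'" "2 \<le> n" "x \<noteq> 0" "- int n \<le> x" "x \<le> int n"
  then show ?thesis using sp_range[of "int n" x] by simp
next
  fix i assume "g = G i" "1 \<le> i" "i + 1 \<le> n" "x \<noteq> 0" "- int n \<le> x" "x \<le> int n"
  then show ?thesis using sw_range[of "int i" "int n" x] by simp
qed

lemma sw_pos: fixes a x y :: int
  assumes "a \<ge> 1" "x \<noteq> y" "x \<noteq> 0" "y \<noteq> 0" "x + y > 0" "(x,y) \<noteq> (a+1, -a)" "(x,y) \<noteq> (-a, a+1)"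
  shows "sw a x + sw a y > 0"
  using assms unfolding sw_def by (auto split: if_split)
lemma sp_pos: fixes x y :: int
  assumes "x \<noteq> y" "x \<noteq> 0" "y \<noteq> 0" "x + y > 0" "(x,y) \<noteq> (1,2)" "(x,y) \<noteq> (2,1)"
  shows "sp x + sp y > 0"
  using assms unfolding sp_def by (auto split: if_split)

lemma sg_pos: "g \<in> valid n \<Longrightarrow> x \<noteq> y \<Longrightarrow> x \<noteq> 0 \<Longrightarrow> y \<noteq> 0 \<Longrightarrow> x + y > 0 \<Longrightarrow> (x,y) \<notin> alpha g \<Longrightarrow>
   sg g x + sg g y > 0"
proof (drule valid_cases, elim disjE exE conjE)
  assume "g = G'" "x \<noteq> y" "x \<noteq> 0" "y \<noteq> 0" "x + y > 0" "(x,y) \<notin> alpha g"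
  then show ?thesis using sp_pos[of x y] by simp
next
  fix i assume "g = G i" "1 \<le> i" "x \<noteq> y" "x \<noteq> 0" "y \<noteq> 0" "x + y > 0" "(x,y) \<notin> alpha g"
  then show ?thesis using sw_pos[of "int i" x y] by simp
qed

lemma finite_alpha: "finite (alpha g)"
  by (cases g) auto

lemma card_alpha: "card (alpha g) \<le> 2"
  by (cases g) (auto simp: card_insert_if)

lemma Nset_step:
  assumes g: "g \<in> valid n" and n: "2 \<le> n"
  shows "card (Nset n (q \<circ> sg g)) \<le> card (Nset n q) + 2"
proof -
  let ?A = "Nset n (q \<circ> sg g)"
  let ?h = "\<lambda>(x,y). (sg g x, sg g y)"
  have sub: "?h ` (?A - alpha g) \<subseteq> Nset n q"
  proof
    fix z assume "z \<in> ?h ` (?A - alpha g)"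
    then obtain x y where z: "z = (sg g x, sg g y)" and xy: "(x,y) \<in> ?A" "(x,y) \<notin> alpha g" by auto
    from xy have c: "x \<noteq> y" "x \<noteq> 0" "- int n \<le> x" "x \<le> int n" "y \<noteq> 0" "- int n \<le> y" "y \<le> int n" "x + y > 0"
      "q (sg g x) + q (sg g y) < 0" unfolding Nset_def by auto
    have "sg g x \<noteq> sg g y" using c(1) sg_inv[OF g] by metis
    moreover have "sg g x + sg g y > 0" using sg_pos[OF g c(1) c(2) c(5) c(8) xy(2)] c by auto
    ultimately show "z \<in> Nset n q" unfolding z Nset_def using c sg_range[OF g n] by auto
  qed
  have inj: "inj_on ?h (?A - alpha g)"
    by (rule inj_onI) (auto, metis sg_inv[OF g], metis sg_inv[OF g])
  have "card (?A - alpha g) \<le> card (Nset n q)"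
    using card_inj_on_le[OF inj sub Nset_finite] .
  moreover have "card ?A \<le> card ((?A - alpha g) \<union> alpha g)"
    by (rule card_mono) (auto simp: Nset_finite finite_alpha)
  moreover have "card ((?A - alpha g) \<union> alpha g) \<le> card (?A - alpha g) + card (alpha g)"
    by (rule card_Un_le)
  ultimately show ?thesis using card_alpha[of g] by linarith
qed

lemma Nset_len: "set y \<subseteq> valid n \<Longrightarrow> 2 \<le> n \<Longrightarrow> card (Nset n (perm y)) \<le> 2 * length y"
proof (induction y rule: rev_induct)
  case Nil
  have "Nset n (\<lambda>x. x) = {}" unfolding Nset_def by auto
  then show ?case by (simp add: id_def)
next
  case (snoc g y)
  have e: "perm (y @ [g]) = perm y \<circ> sg g" by (simp add: perm_append)
  have v: "g \<in> valid n" "set y \<subseteq> valid n" using snoc.prems by auto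
  have "card (Nset n (perm y \<circ> sg g)) \<le> card (Nset n (perm y)) + 2"
    by (rule Nset_step[OF v(1) snoc.prems(2)])
  moreover have "card (Nset n (perm y)) \<le> 2 * length y" using snoc.IH v(2) snoc.prems(2) by blast
  moreover have "length (y @ [g]) = length y + 1" by simp
  ultimately show ?case unfolding e by linarith
qed



definition Wf :: "int \<Rightarrow> int \<Rightarrow> int" where
  "Wf K x = (if x = 1 \<or> x = -1 \<or> x = K+1 \<or> x = -K-1 then -x else x)"

definition Pf :: "int \<Rightarrow> int \<Rightarrow> int \<Rightarrow> int" where
  "Pf A B x = (if x = A then B + 1 else if x = -A then -B-1 else if A < x \<and> x \<le> B + 1 then x - 1
     else if -B-1 \<le> x \<and> x < -A then x + 1 else x)"

lemma perm_wD: "1 \<le> k \<Longrightarrow> perm (wD k) = Wf (int k)"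
proof (induction k rule: nat_induct_at_least)
  case base
  have w: "wD 1 = [G 1, G']" unfolding wD_def by simp
  show ?case
  proof
    fix x :: int
    have "x = 1 \<or> x = 2 \<or> x = -1 \<or> x = -2 \<or> (x \<noteq> 1 \<and> x \<noteq> 2 \<and> x \<noteq> -1 \<and> x \<noteq> -2)" by blast
    then show "perm (wD 1) x = Wf (int 1) x" unfolding w
      by (elim disjE) (simp_all add: sw_def sp_def Wf_def)
  qed
next
  case (Suc k)
  have w: "wD (Suc k) = [G (Suc k)] @ wD k @ [G (Suc k)]" using wD_Suc[of "Suc k"] Suc by simp
  have p: "perm (wD (Suc k)) = sw (1 + int k) \<circ> Wf (int k) \<circ> sw (1 + int k)"
    unfolding w perm_append using Suc by (simp add: fun_eq_iff)
  define K where "K = int k"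
  have K: "K \<ge> 1" using Suc K_def by simp
  show ?case
  proof
    fix x :: int
    have "x = 1 \<or> x = -1 \<or> x = K+1 \<or> x = K+2 \<or> x = -K-1 \<or> x = -K-2 \<or>
      (x \<noteq> 1 \<and> x \<noteq> -1 \<and> x \<noteq> K+1 \<and> x \<noteq> K+2 \<and> x \<noteq> -K-1 \<and> x \<noteq> -K-2)" by blast
    then show "perm (wD (Suc k)) x = Wf (int (Suc k)) x" unfolding p K_def[symmetric]
      using K by (elim disjE) (simp_all add: sw_def Wf_def K_def[symmetric])
  qed
qed

lemma perm_pi_aux: "a \<le> b \<Longrightarrow> 1 \<le> a \<Longrightarrow> perm (map G (rev [a..<b+1])) = Pf (int a) (int b)"
proof (induction b rule: nat_induct_at_least)
  case base
  show ?case
  proof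
    fix x :: int
    define A where "A = int a"
    have A: "A \<ge> 1" using base A_def by simp
    have "x = A \<or> x = A+1 \<or> x = -A \<or> x = -A-1 \<or> (x \<noteq> A \<and> x \<noteq> A+1 \<and> x \<noteq> -A \<and> x \<noteq> -A-1)" by blast
    then show "perm (map G (rev [a..<a+1])) x = Pf (int a) (int a) x"
      using A by (elim disjE) (simp_all add: sw_def Pf_def A_def[symmetric])
  qed
next
  case (Suc b)
  have r: "rev [a..<Suc b + 1] = Suc b # rev [a..<b+1]" using Suc by simp
  have p0: "perm (map G (rev [a..<Suc b+1])) = sw (int (Suc b)) \<circ> perm (map G (rev [a..<b+1]))"
    by (simp only: r list.map perm.simps sg.simps)
  have p: "perm (map G (rev [a..<Suc b+1])) = sw (1 + int b) \<circ> Pf (int a) (int b)"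
    unfolding p0 Suc.IH[OF Suc.prems] by simp
  define A where "A = int a"
  define B where "B = int b"
  have AB: "A \<ge> 1" "A \<le> B" using Suc A_def B_def by auto
  show ?case
  proof
    fix x :: int
    have "x = A \<or> x = -A \<or> x = B+1 \<or> x = B+2 \<or> x = -B-1 \<or> x = -B-2 \<or>
      (x \<noteq> A \<and> x \<noteq> -A \<and> x \<noteq> B+1 \<and> x \<noteq> B+2 \<and> x \<noteq> -B-1 \<and> x \<noteq> -B-2)" by blast
    then show "perm (map G (rev [a..<Suc b+1])) x = Pf (int a) (int (Suc b)) x" unfolding p
      using AB by (elim disjE) (simp_all add: sw_def Pf_def A_def[symmetric] B_def[symmetric])
  qed
qed



lemma count_pi:
  fixes K J :: int
  assumes "2 \<le> K" "K \<le> J" "J + 1 \<le> int n"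
  shows "2 * nat (J + 1 - K) \<le> card (Nset n (Pf K J))"
proof -
  let ?B = "{K+1..J+1}"
  let ?S = "(\<lambda>a. (a,-K)) ` ?B \<union> (\<lambda>a. (-K,a)) ` ?B"
  have sub: "?S \<subseteq> Nset n (Pf K J)"
    using assms unfolding Nset_def Pf_def by auto
  have "card ?S = card ((\<lambda>a. (a,-K)) ` ?B) + card ((\<lambda>a. (-K,a)) ` ?B)"
    by (rule card_Un_disjoint) (use assms in auto)
  also have "\<dots> = 2 * card ?B"
    by (subst card_image, simp add: inj_on_def)+ simp
  also have "card ?B = nat (J + 1 - K)" by simp
  finally have "card ?S = 2 * nat (J + 1 - K)" .
  then show ?thesis using card_mono[OF Nset_finite sub] by simp
qed

lemma count_wpi:
  fixes K J :: int
  assumes "2 \<le> K" "K \<le> J" "J + 1 \<le> int n"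
  shows "2 * nat (J + K - 1) \<le> card (Nset n (Wf J \<circ> Pf K J))"
proof -
  let ?C = "{-(K-1)..J+1} - {0, K}"
  let ?S = "(\<lambda>y. (K,y)) ` ?C \<union> (\<lambda>y. (y,K)) ` ?C"
  have v1: "(Wf J \<circ> Pf K J) K = -J-1" using assms unfolding Wf_def Pf_def by auto
  have v2: "\<bar>(Wf J \<circ> Pf K J) y\<bar> \<le> J" if "y \<in> ?C" for y
    using assms that unfolding Wf_def Pf_def by auto
  have sub: "?S \<subseteq> Nset n (Wf J \<circ> Pf K J)"
  proof
    fix z assume "z \<in> ?S"
    then obtain y where y: "y \<in> ?C" "z = (K,y) \<or> z = (y,K)" by blast
    have "(Wf J \<circ> Pf K J) K + (Wf J \<circ> Pf K J) y < 0" using v1 v2[OF y(1)] by linarith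
    then show "z \<in> Nset n (Wf J \<circ> Pf K J)" using y assms unfolding Nset_def by auto
  qed
  have "card ?S = card ((\<lambda>y. (K,y)) ` ?C) + card ((\<lambda>y. (y,K)) ` ?C)"
    by (rule card_Un_disjoint) auto
  also have "\<dots> = 2 * card ?C"
    by (subst card_image, simp add: inj_on_def)+ simp
  also have "card ?C = card {-(K-1)..J+1} - card {0,K}"
    by (rule card_Diff_subset) (use assms in auto)
  also have "\<dots> = nat (J + K - 1)" using assms by simp
  finally have "card ?S = 2 * nat (J + K - 1)" .
  then show ?thesis using card_mono[OF Nset_finite sub] by simp
qed

lemma len_lower:
  assumes "set x \<subseteq> valid n" "2 \<le> n"
  shows "card (Nset n (perm x)) \<le> 2 * len n x"
proof -
  have ex: "\<exists>k. \<exists>y. set y \<subseteq> valid n \<and> eqv n x y \<and> length y = k"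
    using assms eqv.eqv_refl by blast
  obtain y where y: "set y \<subseteq> valid n" "eqv n x y" "length y = len n x"
    using LeastI_ex[OF ex] unfolding len_def by blast
  show ?thesis using Nset_len[OF y(1) assms(2)] perm_eqv[OF y(2)] y(3) by simp
qed

lemma len_upper: "set y \<subseteq> valid n \<Longrightarrow> eqv n x y \<Longrightarrow> len n x \<le> length y"
  unfolding len_def by (rule Least_le) blast

theorem mainTheorem13:
  fixes n j r :: nat
  assumes "2 \<le> n" and "2 \<le> j" and "j \<le> n - 1" and "r \<le> j - 2"
  shows "eqv n (wD j @ piD j r) (piD j r @ wD (j - r - 1))
         \<and> len n (wD j @ piD j r) = len n (piD j r) + 2 * (j - r - 1)"
proof
  have E: "eqv n (wD j @ piD j r) (piD j r @ wD (j - r - 1))"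
    using main_eqv[OF assms(2,3) assms(4)] .
  show "eqv n (wD j @ piD j r) (piD j r @ wD (j - r - 1))" by (rule E)
  define k where "k = j - r"
  have k: "2 \<le> k" "k \<le> j" "j + 1 \<le> n" using assms k_def by auto
  have vp: "set (piD j r) \<subseteq> valid n" unfolding piD_def valid_def using assms by auto
  have vw: "set (wD m) \<subseteq> valid n" if "m \<le> n - 1" for m
    unfolding wD_def valid_def using that by auto
  have lw: "length (wD m) = 2 * m" if "1 \<le> m" for m unfolding wD_def using that by auto
  have lp: "length (piD j r) = r + 1" unfolding piD_def using assms by simp
  have u1: "len n (piD j r) \<le> r + 1" using len_upper[OF vp eqv.eqv_refl] lp by simp
  have u2: "len n (wD j @ piD j r) \<le> r + 1 + 2 * (j - r - 1)"
    using len_upper[OF _ E] vp vw[of "j - r - 1"] lw[of "j - r - 1"] lp assms by simp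
  have pp: "perm (piD j r) = Pf (int k) (int j)"
    unfolding piD_def k_def using perm_pi_aux[of "j - r" j] assms by simp
  have pw: "perm (wD j @ piD j r) = Wf (int j) \<circ> Pf (int k) (int j)"
    using perm_append perm_wD[of j] pp assms by simp
  have l1: "2 * nat (int j + 1 - int k) \<le> 2 * len n (piD j r)"
    using count_pi[of "int k" "int j" n] k len_lower[OF vp assms(1)] pp by simp
  have l2: "2 * nat (int j + int k - 1) \<le> 2 * len n (wD j @ piD j r)"
    using count_wpi[of "int k" "int j" n] k len_lower[of "wD j @ piD j r" n] vw[of j] vp assms pw by simp
  show "len n (wD j @ piD j r) = len n (piD j r) + 2 * (j - r - 1)"
    using u1 u2 l1 l2 k k_def assms by simp
qed

end
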